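(* If $D$ is a weakly locally finite division ring, then the center $Z(D')$ of the derived subgroup $D'=[D^*,D^*]$ of $D^*$ is a torsion group.
   Context: A division ring is weakly locally finite if the division subring generated by any finite subset is finite dimensional over its own center. *)

theory Defs
  imports Main
begin

text \<open>Division rings are modelled by the type class division_ring; the ring D is the
whole type.\<close>

definition division_subring :: "'a::division_ring set \<Rightarrow> bool" where
  "division_subring K \<longleftrightarrow> 0 \<in> K \<and> 1 \<in> K \<and>
     (\<forall>x\<in>K. \<forall>y\<in>K. x + y \<in> K \<and> x * y \<in> K) \<and>
     (\<forall>x\<in>K. - x \<in> K) \<and>
     (\<forall>x\<in>K. x \<noteq> 0 \<longrightarrow> inverse x \<in> K)"

definition gen_division_subring :: "'a::division_ring set \<Rightarrow> 'a set" where
  "gen_division_subring S = \<Inter>{K. division_subring K \<and> S \<subseteq> K}"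

definition center_of :: "'a::division_ring set \<Rightarrow> 'a set" where
  "center_of K = {z \<in> K. \<forall>x\<in>K. z * x = x * z}"

definition fin_dim_over_center :: "'a::division_ring set \<Rightarrow> bool" where
  "fin_dim_over_center K \<longleftrightarrow>
     (\<exists>B. finite B \<and> B \<subseteq> K \<and>
        (\<forall>x\<in>K. \<exists>c. (\<forall>b\<in>B. c b \<in> center_of K) \<and> x = (\<Sum>b\<in>B. c b * b)))"

definition weakly_locally_finite :: "'a::division_ring itself \<Rightarrow> bool" where
  "weakly_locally_finite TYPE('a) \<longleftrightarrow>
     (\<forall>S::'a set. finite S \<longrightarrow> fin_dim_over_center (gen_division_subring S))"

definition mult_subgroup :: "'a::division_ring set \<Rightarrow> bool" where
  "mult_subgroup H \<longleftrightarrow> H \<subseteq> - {0} \<and> 1 \<in> H \<and>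
     (\<forall>x\<in>H. \<forall>y\<in>H. x * y \<in> H) \<and> (\<forall>x\<in>H. inverse x \<in> H)"

definition derived_subgroup :: "'a::division_ring set" where
  "derived_subgroup = \<Inter>{H. mult_subgroup H \<and>
     (\<forall>x y. x \<noteq> 0 \<longrightarrow> y \<noteq> 0 \<longrightarrow> x * y * inverse x * inverse y \<in> H)}"

end

theory Submission
  imports Defs "Jordan_Normal_Form.Determinant"
begin


lemma center_0: "division_subring K \<Longrightarrow> 0 \<in> center_of K"
  by (auto simp: center_of_def division_subring_def)
lemma center_1: "division_subring K \<Longrightarrow> 1 \<in> center_of K"
  by (auto simp: center_of_def division_subring_def)
lemma center_add: "division_subring K \<Longrightarrow> x \<in> center_of K \<Longrightarrow> y \<in> center_of K \<Longrightarrow> x + y \<in> center_of K"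
  by (auto simp: center_of_def division_subring_def distrib_left distrib_right)
lemma center_D: assumes "z \<in> center_of K" "x \<in> K" shows "z * x = x * z"
proof -
  have "\<forall>x\<in>K. z * x = x * z" using assms(1) unfolding center_of_def mem_Collect_eq by (rule conjunct2)
  then show ?thesis using assms(2) by (rule bspec)
qed
lemma center_K: assumes "z \<in> center_of K" shows "z \<in> K"
  using assms unfolding center_of_def mem_Collect_eq by (rule conjunct1)
lemma center_I: assumes "z \<in> K" "\<And>x. x \<in> K \<Longrightarrow> z * x = x * z" shows "z \<in> center_of K"
  using assms unfolding center_of_def by blast

lemma center_mult: "division_subring K \<Longrightarrow> x \<in> center_of K \<Longrightarrow> y \<in> center_of K \<Longrightarrow> x * y \<in> center_of K"
proof -
  assume K: "division_subring K" and x: "x \<in> center_of K" and y: "y \<in> center_of K"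
  have xK: "x \<in> K" and yK: "y \<in> K" using x y by (auto intro: center_K)
  have "x * y \<in> K" using K xK yK unfolding division_subring_def by blast
  moreover have "x * y * w = w * (x * y)" if "w \<in> K" for w
  proof -
    have "x * y * w = x * (y * w)" by (simp add: mult.assoc)
    also have "\<dots> = x * (w * y)" using center_D[OF y that] by simp
    also have "\<dots> = (x * w) * y" by (simp add: mult.assoc)
    also have "\<dots> = (w * x) * y" using center_D[OF x that] by simp
    finally show ?thesis by (simp add: mult.assoc)
  qed
  ultimately show ?thesis by (rule center_I)
qed
lemma center_uminus: "division_subring K \<Longrightarrow> x \<in> center_of K \<Longrightarrow> - x \<in> center_of K"
  unfolding center_of_def division_subring_def by simp
lemma center_diff: "division_subring K \<Longrightarrow> x \<in> center_of K \<Longrightarrow> y \<in> center_of K \<Longrightarrow> x - y \<in> center_of K"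
  using center_add[of K x "-y"] center_uminus[of K y] by simp

lemma center_comm: "x \<in> center_of K \<Longrightarrow> y \<in> center_of K \<Longrightarrow> x * y = y * x"
  by (rule center_D, assumption, rule center_K)

definition pset :: "('a::division_ring set \<Rightarrow> 'a) set" where
  "pset = {f. \<forall>K. if division_subring K then f K \<in> center_of K else f K = 0}"

typedef (overloaded) 'a pr = "pset :: ('a::division_ring set \<Rightarrow> 'a) set"
  morphisms rp Ab
  by (rule exI[of _ "\<lambda>K. 0"]) (auto simp: center_0 pset_def)

lemma pset_I: "(\<And>K. division_subring K \<Longrightarrow> f K \<in> center_of K) \<Longrightarrow> (\<And>K. \<not> division_subring K \<Longrightarrow> f K = 0) \<Longrightarrow> f \<in> pset"
  by (auto simp: pset_def)
lemma rp_ds: "division_subring K \<Longrightarrow> rp a K \<in> center_of K"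
  using rp[of a] by (auto simp: pset_def dest: spec[of _ K])
lemma rp_nds: "\<not> division_subring K \<Longrightarrow> rp a K = 0"
  using rp[of a] by (auto simp: pset_def dest: spec[of _ K])
lemma rp_eqI: "(\<And>K. division_subring K \<Longrightarrow> rp a K = rp b K) \<Longrightarrow> a = b"
  by (metis rp_inject ext rp_nds)

instantiation pr :: (division_ring) comm_ring_1
begin
definition "0 = Ab (\<lambda>K. 0)"
definition "1 = Ab (\<lambda>K. if division_subring K then 1 else 0)"
definition "a + b = Ab (\<lambda>K. rp a K + rp b K)"
definition "a - b = Ab (\<lambda>K. rp a K - rp b K)"
definition "- a = Ab (\<lambda>K. - rp a K)"
definition "a * b = Ab (\<lambda>K. rp a K * rp b K)"

lemma rp_zero: "rp (0::'a pr) K = 0"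
  unfolding zero_pr_def by (subst Ab_inverse) (auto intro!: pset_I center_0)
lemma rp_one: "rp (1::'a pr) K = (if division_subring K then 1 else 0)"
  unfolding one_pr_def by (subst Ab_inverse) (auto intro!: pset_I center_1)
lemma rp_plus: "rp (a + b) K = rp a K + rp b K"
  unfolding plus_pr_def by (subst Ab_inverse) (auto intro!: pset_I center_add rp_ds simp: rp_nds)
lemma rp_minus: "rp (a - b) K = rp a K - rp b K"
  unfolding minus_pr_def by (subst Ab_inverse) (auto intro!: pset_I center_diff rp_ds simp: rp_nds)
lemma rp_uminus: "rp (- a) K = - rp a K"
  unfolding uminus_pr_def by (subst Ab_inverse) (auto intro!: pset_I center_uminus rp_ds simp: rp_nds)
lemma rp_times: "rp (a * b) K = rp a K * rp b K"
  unfolding times_pr_def by (subst Ab_inverse) (auto intro!: pset_I center_mult rp_ds simp: rp_nds)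

instance
proof
  fix a b c :: "'a pr"
  show "a * b * c = a * (b * c)" by (rule rp_eqI) (simp add: rp_times mult.assoc)
  show "a * b = b * a" by (rule rp_eqI) (simp add: rp_times center_comm[OF rp_ds rp_ds])
  show "1 * a = a" by (rule rp_eqI) (simp add: rp_times rp_one)
  show "a + b + c = a + (b + c)" by (rule rp_eqI) (simp add: rp_plus add.assoc)
  show "a + b = b + a" by (rule rp_eqI) (simp add: rp_plus add.commute)
  show "0 + a = a" by (rule rp_eqI) (simp add: rp_plus rp_zero)
  show "- a + a = 0" by (rule rp_eqI) (simp add: rp_plus rp_zero rp_uminus)
  show "a - b = a + - b" by (rule rp_eqI) (simp add: rp_plus rp_minus rp_uminus)
  show "(a + b) * c = a * c + b * c" by (rule rp_eqI) (simp add: rp_plus rp_times distrib_right)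
  show "(0::'a pr) \<noteq> 1"
  proof
    assume "(0::'a pr) = 1"
    then have "rp (0::'a pr) UNIV = rp 1 UNIV" by simp
    moreover have "division_subring (UNIV::'a set)" unfolding division_subring_def by simp
    ultimately show False unfolding rp_zero rp_one by simp
  qed
qed
end

lemma rp_sum: "rp (sum f A) K = (\<Sum>x\<in>A. rp (f x) K)"
  by (induction A rule: infinite_finite_induct) (auto simp: rp_zero rp_plus)
lemma rp_power: "division_subring K \<Longrightarrow> rp (x ^ n) K = (rp x K) ^ n"
  by (induction n) (auto simp: rp_one rp_times)



definition comm :: "'a::division_ring \<Rightarrow> 'a \<Rightarrow> 'a" where
  "comm x y = x * y * inverse x * inverse y"

inductive_set cprod :: "'a::division_ring set \<Rightarrow> 'a set" for K where
  one: "1 \<in> cprod K"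
| step: "x \<in> K \<Longrightarrow> y \<in> K \<Longrightarrow> x \<noteq> 0 \<Longrightarrow> y \<noteq> 0 \<Longrightarrow> p \<in> cprod K \<Longrightarrow> comm x y * p \<in> cprod K"

lemma comm_nz: "x \<noteq> 0 \<Longrightarrow> y \<noteq> 0 \<Longrightarrow> comm x y \<noteq> (0::'a::division_ring)"
  by (simp add: comm_def)

lemma cprod_nz: "p \<in> cprod K \<Longrightarrow> p \<noteq> 0"
  by (induction rule: cprod.induct) (auto simp: comm_nz)

lemma cprod_mult: "p \<in> cprod K \<Longrightarrow> q \<in> cprod K \<Longrightarrow> p * q \<in> cprod K"
  by (induction rule: cprod.induct) (auto simp: mult.assoc intro: cprod.step)

lemma comm_in: "x \<in> K \<Longrightarrow> y \<in> K \<Longrightarrow> x \<noteq> 0 \<Longrightarrow> y \<noteq> 0 \<Longrightarrow> comm x y \<in> cprod K"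
  using cprod.step[OF _ _ _ _ cprod.one, of x K y] by simp

lemma inverse_comm: "x \<noteq> 0 \<Longrightarrow> y \<noteq> 0 \<Longrightarrow> inverse (comm x y) = comm y (x::'a::division_ring)"
  by (simp add: comm_def nonzero_inverse_mult_distrib mult.assoc)

lemma cprod_inverse: "p \<in> cprod K \<Longrightarrow> inverse p \<in> cprod K"
proof (induction rule: cprod.induct)
  case one then show ?case by (simp add: cprod.one)
next
  case (step x y p)
  have "inverse (comm x y * p) = inverse p * comm y x"
    using step by (simp add: nonzero_inverse_mult_distrib comm_nz cprod_nz inverse_comm)
  then show ?case using step by (simp add: cprod_mult comm_in)
qed

lemma cprod_mono: "p \<in> cprod K \<Longrightarrow> K \<subseteq> L \<Longrightarrow> p \<in> cprod L"
proof (induction p rule: cprod.induct)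
  case one show ?case by (rule cprod.one)
next
  case (step x y p) then show ?case by (auto intro: cprod.step)
qed

lemma mult_subgroup_cprod: "mult_subgroup (cprod (UNIV::'a::division_ring set))"
  unfolding mult_subgroup_def
  using cprod_nz cprod.one cprod_mult cprod_inverse by blast

lemma derived_sub_cprod: "(derived_subgroup :: 'a::division_ring set) \<subseteq> cprod UNIV"
  unfolding derived_subgroup_def
  by (rule Inter_lower) (auto simp: mult_subgroup_cprod comm_in[unfolded comm_def])

lemma comm_in_derived: "x \<noteq> 0 \<Longrightarrow> y \<noteq> 0 \<Longrightarrow> comm x y \<in> (derived_subgroup :: 'a::division_ring set)"
  unfolding derived_subgroup_def comm_def by blast

lemma derived_nz: "z \<in> (derived_subgroup :: 'a::division_ring set) \<Longrightarrow> z \<noteq> 0"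
  using derived_sub_cprod cprod_nz by blast

lemma commutes_inverse:
  fixes z y :: "'a::division_ring"
  assumes "z * y = y * z" shows "z * inverse y = inverse y * z"
proof (cases "y = 0")
  case True then show ?thesis by simp
next
  case False
  have "inverse y * z = inverse y * z * (y * inverse y)" using False by simp
  also have "\<dots> = inverse y * (z * y) * inverse y" by (simp add: mult.assoc)
  also have "\<dots> = inverse y * (y * z) * inverse y" using assms by simp
  also have "\<dots> = z * inverse y" using False by (simp add: mult.assoc[symmetric])
  finally show ?thesis by simp
qed

lemma hua_conj:
  fixes z x :: "'a::division_ring"
  assumes z: "z \<in> center_of derived_subgroup" and x: "x \<noteq> 0"
  shows "z * (x * z * inverse x) = (x * z * inverse x) * z"
proof -
  have zD: "z \<in> derived_subgroup" using z unfolding center_of_def by blast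
  have znz: "z \<noteq> 0" using derived_nz[OF zD] .
  have "comm x z \<in> derived_subgroup" using comm_in_derived[OF x znz] .
  then have e: "z * comm x z = comm x z * z" using z unfolding center_of_def by blast
  define b where "b = x * z * inverse x"
  have cb: "comm x z = b * inverse z" unfolding comm_def b_def by simp
  have "z * b = z * b * inverse z * z" using znz by (simp add: mult.assoc)
  also have "\<dots> = b * inverse z * z * z" using e cb by (simp add: mult.assoc)
  also have "\<dots> = b * z" using znz by (simp add: mult.assoc)
  finally show ?thesis unfolding b_def .
qed

lemma hua:
  fixes z :: "'a::division_ring"
  assumes z: "z \<in> center_of derived_subgroup"
  shows "z * x = x * z"
proof -
  consider "x = 0" | "x + 1 = 0" | "x \<noteq> 0" "x + 1 \<noteq> 0" by blast
  then show ?thesis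
  proof cases
    case 1 then show ?thesis by simp
  next
    case 2 then have "x = - 1" by (simp add: eq_neg_iff_add_eq_0)
    then show ?thesis by simp
  next
    case 3
    define b where "b = x * z * inverse x"
    define c where "c = (x + 1) * z * inverse (x + 1)"
    have zb: "z * b = b * z" unfolding b_def using hua_conj[OF z 3(1)] .
    have zc: "z * c = c * z" unfolding c_def using hua_conj[OF z 3(2)] .
    have bx: "b * x = x * z" unfolding b_def using 3 by (simp add: mult.assoc)
    have cx: "c * (x + 1) = (x + 1) * z" unfolding c_def using 3 by (simp add: mult.assoc)
    have key: "(c - b) * x = z - c"
    proof -
      have "c * x + c = x * z + z" using cx by (simp add: distrib_left distrib_right)
      then show ?thesis using bx by (simp add: left_diff_distrib algebra_simps)
    qed
    show ?thesis
    proof (cases "c = b")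
      case True
      then have "z = c" using key by simp
      then have "(x + 1) * z = z * (x + 1)" using cx by simp
      then show ?thesis by (simp add: distrib_left distrib_right)
    next
      case False
      then have "inverse (c - b) * ((c - b) * x) = x" by (simp add: mult.assoc[symmetric])
      then have xe: "x = inverse (c - b) * (z - c)" using key by simp
      have zcb: "z * (c - b) = (c - b) * z" using zb zc by (simp add: algebra_simps)
      have zi: "z * inverse (c - b) = inverse (c - b) * z" by (rule commutes_inverse[OF zcb])
      have zzc: "z * (z - c) = (z - c) * z" using zc by (simp add: algebra_simps)
      have "z * x = inverse (c - b) * z * (z - c)" unfolding xe using zi by (simp add: mult.assoc[symmetric])
      also have "\<dots> = x * z" unfolding xe using zzc by (simp add: mult.assoc)
      finally show ?thesis .
    qed
  qed
qed

lemma ds_UNIV: "division_subring (UNIV::'a::division_ring set)"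
  unfolding division_subring_def by simp

lemma gen_ds: "division_subring (gen_division_subring S)"
  unfolding gen_division_subring_def division_subring_def by blast

lemma gen_sup: "S \<subseteq> gen_division_subring S"
  unfolding gen_division_subring_def by blast

lemma gen_mono: "S \<subseteq> T \<Longrightarrow> gen_division_subring S \<subseteq> gen_division_subring T"
  unfolding gen_division_subring_def by blast

lemma cprod_finite_gen:
  "p \<in> cprod (UNIV::'a::division_ring set) \<Longrightarrow> \<exists>S. finite S \<and> p \<in> cprod (gen_division_subring S)"
proof (induction rule: cprod.induct)
  case one show ?case by (rule exI[of _ "{}"]) (simp add: cprod.one)
next
  case (step x y p)
  from step.IH obtain S where S: "finite S" "p \<in> cprod (gen_division_subring S)" by (elim exE conjE)
  define T where "T = insert x (insert y S)"
  have ST: "S \<subseteq> T" unfolding T_def by blast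
  have "p \<in> cprod (gen_division_subring T)"
    by (rule cprod_mono[OF S(2) gen_mono[OF ST]])
  moreover have "x \<in> gen_division_subring T" "y \<in> gen_division_subring T"
    using gen_sup[of T] unfolding T_def by auto
  ultimately have "comm x y * p \<in> cprod (gen_division_subring T)"
    using step.hyps(3,4) by (intro cprod.step)
  moreover have "finite T" using S(1) unfolding T_def by simp
  ultimately show ?case by blast
qed

lemma cprod_sub: "p \<in> cprod K \<Longrightarrow> division_subring K \<Longrightarrow> p \<in> K"
proof (induction p rule: cprod.induct)
  case one then show ?case by (simp add: division_subring_def)
next
  case (step x y p)
  then show ?case unfolding comm_def division_subring_def by simp
qed



lemma center_inverse: "division_subring K \<Longrightarrow> x \<in> center_of K \<Longrightarrow> inverse x \<in> center_of K"
proof -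
  assume K: "division_subring K" and x: "x \<in> center_of K"
  have xK: "x \<in> K" using x by (rule center_K)
  show ?thesis
  proof (cases "x = 0")
    case True then show ?thesis using center_0[OF K] by simp
  next
    case False
    have "inverse x \<in> K" using K xK False unfolding division_subring_def by blast
    moreover have "inverse x * w = w * inverse x" if "w \<in> K" for w
      using commutes_inverse[of w x] center_D[OF x that] by simp
    ultimately show ?thesis by (rule center_I)
  qed
qed

lemma center_sum: "division_subring K \<Longrightarrow> (\<And>i. i \<in> A \<Longrightarrow> f i \<in> center_of K) \<Longrightarrow> sum f A \<in> center_of K"
  by (induction A rule: infinite_finite_induct) (auto intro: center_0 center_add)

definition spans :: "'a::division_ring set \<Rightarrow> 'a set \<Rightarrow> bool" where
  "spans K B \<longleftrightarrow> finite B \<and> B \<subseteq> K \<and>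
     (\<forall>x\<in>K. \<exists>c. (\<forall>b\<in>B. c b \<in> center_of K) \<and> x = (\<Sum>b\<in>B. c b * b))"

lemma exists_basis:
  assumes K: "division_subring K" and fd: "fin_dim_over_center K"
  shows "\<exists>B. spans K B \<and> (\<forall>c. (\<forall>b\<in>B. c b \<in> center_of K) \<longrightarrow> (\<Sum>b\<in>B. c b * b) = 0 \<longrightarrow> (\<forall>b\<in>B. c b = 0))"
proof -
  obtain B0 where "spans K B0" using fd unfolding fin_dim_over_center_def spans_def by blast
  then obtain B where B: "spans K B" and minB: "\<And>B'. spans K B' \<Longrightarrow> card B \<le> card B'"
    using ex_has_least_nat[of "spans K" B0 card] by blast
  have fin: "finite B" and BK: "B \<subseteq> K" using B unfolding spans_def by auto
  have "\<forall>b\<in>B. c b = 0" if cF: "\<forall>b\<in>B. c b \<in> center_of K" and c0: "(\<Sum>b\<in>B. c b * b) = 0" for c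
  proof (rule ccontr)
    assume "\<not> (\<forall>b\<in>B. c b = 0)"
    then obtain b0 where b0: "b0 \<in> B" "c b0 \<noteq> 0" by blast
    define B' where "B' = B - {b0}"
    define ic where "ic = inverse (c b0)"
    have icF: "ic \<in> center_of K" unfolding ic_def using center_inverse[OF K] cF b0 by blast
    have sB: "(\<Sum>b\<in>B. g b) = g b0 + (\<Sum>b\<in>B'. g b)" for g :: "'a \<Rightarrow> 'a"
      unfolding B'_def using fin b0(1) by (rule sum.remove)
    have e1: "c b0 * b0 = - (\<Sum>b\<in>B'. c b * b)"
      using c0 sB[of "\<lambda>b. c b * b"] by (simp add: eq_neg_iff_add_eq_0)
    have e2: "b0 = - (\<Sum>b\<in>B'. (ic * c b) * b)"
    proof -
      have "b0 = ic * (c b0 * b0)" unfolding ic_def using b0(2) by (simp add: mult.assoc[symmetric])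
      also have "\<dots> = - (\<Sum>b\<in>B'. ic * (c b * b))" using e1 by (simp add: sum_distrib_left)
      finally show ?thesis by (simp add: mult.assoc)
    qed
    have "spans K B'"
      unfolding spans_def
    proof (intro conjI ballI)
      show "finite B'" using fin unfolding B'_def by simp
      show "B' \<subseteq> K" using BK unfolding B'_def by blast
    next
      fix x assume xK: "x \<in> K"
      then obtain d where dF: "\<forall>b\<in>B. d b \<in> center_of K" and xd: "x = (\<Sum>b\<in>B. d b * b)"
        using B unfolding spans_def by blast
      define e where "e b = d b - d b0 * (ic * c b)" for b
      have "x = d b0 * b0 + (\<Sum>b\<in>B'. d b * b)" using xd sB[of "\<lambda>b. d b * b"] by simp
      also have "d b0 * b0 = - (\<Sum>b\<in>B'. d b0 * (ic * c b) * b)"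
        using e2 by (simp add: sum_distrib_left mult.assoc)
      finally have "x = (\<Sum>b\<in>B'. d b * b) - (\<Sum>b\<in>B'. d b0 * (ic * c b) * b)" by simp
      also have "\<dots> = (\<Sum>b\<in>B'. e b * b)" unfolding e_def
        by (simp add: sum_subtractf[symmetric] left_diff_distrib)
      finally have "x = (\<Sum>b\<in>B'. e b * b)" .
      moreover have "\<forall>b\<in>B'. e b \<in> center_of K"
      proof
        fix b assume "b \<in> B'"
        then have "b \<in> B" unfolding B'_def by blast
        then show "e b \<in> center_of K" unfolding e_def
          using dF cF b0(1) icF by (intro center_diff[OF K] center_mult[OF K]) auto
      qed
      ultimately show "\<exists>c. (\<forall>b\<in>B'. c b \<in> center_of K) \<and> x = (\<Sum>b\<in>B'. c b * b)" by blast
    qed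
    then have "card B \<le> card B'" by (rule minB)
    moreover have "card B' < card B" unfolding B'_def using fin b0(1) by (rule card_Diff1_less)
    ultimately show False by simp
  qed
  then show ?thesis using B by blast
qed



locale fdb =
  fixes K :: "'a::division_ring set" and bs :: "'a list"
  assumes ds: "division_subring K"
    and dist: "distinct bs"
    and sp: "spans K (set bs)"
    and indep: "\<And>c. \<forall>b\<in>set bs. c b \<in> center_of K \<Longrightarrow> (\<Sum>b\<in>set bs. c b * b) = 0 \<Longrightarrow> \<forall>b\<in>set bs. c b = 0"
begin

abbreviation "B \<equiv> set bs"
abbreviation "F \<equiv> center_of K"

lemma BK: "B \<subseteq> K" using sp unfolding spans_def by blast

lemma K_mult: "x \<in> K \<Longrightarrow> y \<in> K \<Longrightarrow> x * y \<in> K"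
  using ds unfolding division_subring_def by blast

definition coord :: "'a \<Rightarrow> 'a \<Rightarrow> 'a" where
  "coord x = (SOME c. (\<forall>b\<in>B. c b \<in> F) \<and> x = (\<Sum>b\<in>B. c b * b))"

lemma coord: assumes "x \<in> K" shows "(\<forall>b\<in>B. coord x b \<in> F) \<and> x = (\<Sum>b\<in>B. coord x b * b)"
proof -
  have "\<exists>c. (\<forall>b\<in>B. c b \<in> F) \<and> x = (\<Sum>b\<in>B. c b * b)" using sp assms unfolding spans_def by blast
  then show ?thesis unfolding coord_def by (rule someI_ex)
qed

lemma coord_in: "x \<in> K \<Longrightarrow> b \<in> B \<Longrightarrow> coord x b \<in> F"
  using coord by blast

lemma K_sum: "(\<And>i. i \<in> A \<Longrightarrow> f i \<in> K) \<Longrightarrow> sum f A \<in> K"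
proof (induction A rule: infinite_finite_induct)
  case (infinite A) then show ?case using ds unfolding division_subring_def by simp
next
  case empty then show ?case using ds unfolding division_subring_def by simp
next
  case (insert a A) then show ?case using ds unfolding division_subring_def by simp
qed

lemma coord_unique:
  assumes cF: "\<forall>b\<in>B. c b \<in> F" and x: "x = (\<Sum>b\<in>B. c b * b)" and b: "b \<in> B"
  shows "coord x b = c b"
proof -
  have xK: "x \<in> K" unfolding x
  proof (rule K_sum)
    fix b assume "b \<in> B"
    then show "c b * b \<in> K" using cF BK by (intro K_mult) (auto intro: center_K)
  qed
  have cx: "\<forall>b\<in>B. coord x b \<in> F" "x = (\<Sum>b\<in>B. coord x b * b)" using coord[OF xK] by auto
  have 1: "(\<Sum>b\<in>B. (coord x b - c b) * b) = 0"
    using cx(2) x by (simp add: left_diff_distrib sum_subtractf)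
  have 2: "\<forall>b\<in>B. coord x b - c b \<in> F" using cx(1) cF by (auto intro: center_diff[OF ds])
  have "\<forall>b\<in>B. coord x b - c b = 0" by (rule indep[OF 2 1])
  then show ?thesis using b by simp
qed

lemma scal_comm: "a \<in> K \<Longrightarrow> f \<in> F \<Longrightarrow> a * (f * y) = f * (a * y)"
proof -
  assume a: "a \<in> K" and f: "f \<in> F"
  have "a * (f * y) = (a * f) * y" by (simp add: mult.assoc)
  also have "a * f = f * a" using center_D[OF f a] by simp
  finally show ?thesis by (simp add: mult.assoc)
qed

lemma coord_mult:
  assumes a: "a \<in> K" and a': "a' \<in> K" and u: "u \<in> B" and v: "v \<in> B"
  shows "coord (a * a' * v) u = (\<Sum>w\<in>B. coord (a * w) u * coord (a' * v) w)"
proof (rule coord_unique)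
  have vK: "v \<in> K" using v BK by blast
  have a'v: "a' * v \<in> K" using K_mult[OF a' vK] .
  have aw: "a * w \<in> K" if "w \<in> B" for w using K_mult[OF a] that BK by blast
  show "\<forall>u\<in>B. (\<Sum>w\<in>B. coord (a * w) u * coord (a' * v) w) \<in> F"
    using coord_in aw a'v by (auto intro!: center_sum[OF ds] center_mult[OF ds])
  have "a * a' * v = a * (\<Sum>w\<in>B. coord (a' * v) w * w)"
    using coord[OF a'v] by (simp add: mult.assoc)
  also have "\<dots> = (\<Sum>w\<in>B. coord (a' * v) w * (a * w))"
    by (simp add: sum_distrib_left scal_comm[OF a coord_in[OF a'v]])
  also have "\<dots> = (\<Sum>w\<in>B. coord (a' * v) w * (\<Sum>u\<in>B. coord (a * w) u * u))"
    by (rule sum.cong) (use coord aw in auto)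
  also have "\<dots> = (\<Sum>w\<in>B. \<Sum>u\<in>B. (coord (a * w) u * coord (a' * v) w) * u)"
  proof (rule sum.cong[OF refl])
    fix w assume w: "w \<in> B"
    have "coord (a' * v) w * (\<Sum>u\<in>B. coord (a * w) u * u) = (\<Sum>u\<in>B. (coord (a' * v) w * coord (a * w) u) * u)"
      by (simp add: sum_distrib_left mult.assoc)
    also have "\<dots> = (\<Sum>u\<in>B. (coord (a * w) u * coord (a' * v) w) * u)"
      using center_comm[OF coord_in[OF a'v w] coord_in[OF aw[OF w]]] by simp
    finally show "coord (a' * v) w * (\<Sum>u\<in>B. coord (a * w) u * u) = (\<Sum>u\<in>B. (coord (a * w) u * coord (a' * v) w) * u)" .
  qed
  also have "\<dots> = (\<Sum>u\<in>B. (\<Sum>w\<in>B. coord (a * w) u * coord (a' * v) w) * u)"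
    by (subst sum.swap) (simp add: sum_distrib_right)
  finally show "a * a' * v = (\<Sum>u\<in>B. (\<Sum>w\<in>B. coord (a * w) u * coord (a' * v) w) * u)" .
qed (rule u)

lemma coord_central:
  assumes zK: "z \<in> K" and zc: "\<And>x. z * x = x * z" and u: "u \<in> B" and v: "v \<in> B"
  shows "coord (z * v) u = (if u = v then z else 0)"
proof (rule coord_unique[OF _ _ u])
  have zF: "z \<in> F" using zK zc by (intro center_I)
  show "\<forall>u\<in>B. (if u = v then z else 0) \<in> F" using zF center_0[OF ds] by auto
  have "(\<Sum>u\<in>B. (if u = v then z else 0) * u) = (\<Sum>u\<in>B. if u = v then z * u else 0)"
    by (rule sum.cong) auto
  also have "\<dots> = z * v" using v by (simp add: sum.delta')
  finally show "z * v = (\<Sum>u\<in>B. (if u = v then z else 0) * u)" by simp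
qed

end


context fdb begin

definition ent :: "'a \<Rightarrow> 'a \<Rightarrow> 'a pr" where
  "ent v d = Ab (\<lambda>L. if L = K then v else if division_subring L then d else 0)"

lemma rp_ent:
  assumes v: "v \<in> F" and d: "d = 0 \<or> d = 1"
  shows "rp (ent v d) L = (if L = K then v else if division_subring L then d else 0)"
proof -
  have mem: "(\<lambda>L. if L = K then v else if division_subring L then d else 0) \<in> pset"
  proof (rule pset_I)
    fix L :: "'a set" assume L: "division_subring L"
    show "(if L = K then v else if division_subring L then d else 0) \<in> center_of L"
      using v d L center_0[OF L] center_1[OF L] by auto
  next
    fix L :: "'a set" assume L: "\<not> division_subring L"
    then have "L \<noteq> K" using ds by blast
    then show "(if L = K then v else if division_subring L then d else 0) = 0" using L by simp
  qed
  show ?thesis unfolding ent_def Ab_inverse[OF mem] by simp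
qed

abbreviation "n \<equiv> length bs"

lemma sum_B: "sum g B = (\<Sum>j\<in>{0..<n}. g (bs ! j))"
  by (simp add: sum.distinct_set_conv_list[OF dist] sum_list_sum_nth)

lemma nthB: "j < n \<Longrightarrow> bs ! j \<in> B" by simp
lemma nthK: "j < n \<Longrightarrow> bs ! j \<in> K" using BK by (auto)

definition E :: "'a \<Rightarrow> 'a pr mat" where
  "E a = mat n n (\<lambda>(i,j). ent (coord (a * bs ! j) (bs ! i)) (if i = j then 1 else 0))"

lemma E_carrier: "E a \<in> carrier_mat n n" unfolding E_def by simp

lemma E_index: "i < n \<Longrightarrow> j < n \<Longrightarrow> E a $$ (i,j) = ent (coord (a * bs ! j) (bs ! i)) (if i = j then 1 else 0)"
  unfolding E_def by simp

lemma coord_F: "a \<in> K \<Longrightarrow> i < n \<Longrightarrow> j < n \<Longrightarrow> coord (a * bs ! j) (bs ! i) \<in> F"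
  by (intro coord_in K_mult nthK nthB)

lemma rp_E: "a \<in> K \<Longrightarrow> i < n \<Longrightarrow> j < n \<Longrightarrow> division_subring L \<Longrightarrow>
  rp (E a $$ (i,j)) L = (if L = K then coord (a * bs ! j) (bs ! i) else if i = j then 1 else 0)"
  by (simp add: E_index rp_ent coord_F)

lemma E_mult:
  assumes a: "a \<in> K" and a': "a' \<in> K"
  shows "E (a * a') = E a * E a'"
proof (rule eq_matI)
  show "dim_row (E (a * a')) = dim_row (E a * E a')" "dim_col (E (a * a')) = dim_col (E a * E a')"
    unfolding E_def by simp_all
  fix i k assume "i < dim_row (E a * E a')" "k < dim_col (E a * E a')"
  then have i: "i < n" and k: "k < n" unfolding E_def by simp_all
  have aa': "a * a' \<in> K" by (rule K_mult[OF a a'])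
  have rhs: "(E a * E a') $$ (i,k) = (\<Sum>j\<in>{0..<n}. E a $$ (i,j) * E a' $$ (j,k))"
    using i k unfolding E_def by (simp add: scalar_prod_def)
  show "E (a * a') $$ (i, k) = (E a * E a') $$ (i, k)"
    unfolding rhs
  proof (rule rp_eqI)
    fix L :: "'a set" assume L: "division_subring L"
    have r: "rp (\<Sum>j\<in>{0..<n}. E a $$ (i,j) * E a' $$ (j,k)) L =
      (\<Sum>j\<in>{0..<n}. rp (E a $$ (i,j)) L * rp (E a' $$ (j,k)) L)"
      by (simp add: rp_sum rp_times)
    show "rp (E (a * a') $$ (i, k)) L = rp (\<Sum>j\<in>{0..<n}. E a $$ (i,j) * E a' $$ (j,k)) L"
    proof (cases "L = K")
      case True
      have "rp (E (a * a') $$ (i, k)) L = coord (a * a' * bs ! k) (bs ! i)"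
        using rp_E[OF aa' i k L] True by simp
      also have "\<dots> = (\<Sum>w\<in>B. coord (a * w) (bs ! i) * coord (a' * bs ! k) w)"
        using coord_mult[OF a a' nthB[OF i] nthB[OF k]] .
      also have "\<dots> = (\<Sum>j\<in>{0..<n}. coord (a * bs ! j) (bs ! i) * coord (a' * bs ! k) (bs ! j))"
        by (rule sum_B)
      also have "\<dots> = (\<Sum>j\<in>{0..<n}. rp (E a $$ (i,j)) L * rp (E a' $$ (j,k)) L)"
        by (rule sum.cong[OF refl]) (use rp_E[OF a] rp_E[OF a'] i k L True in auto)
      finally show ?thesis using r by simp
    next
      case False
      have "(\<Sum>j\<in>{0..<n}. rp (E a $$ (i,j)) L * rp (E a' $$ (j,k)) L)
          = (\<Sum>j\<in>{0..<n}. (if i = j then 1 else 0) * (if j = k then 1 else 0))"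
        by (rule sum.cong[OF refl]) (use rp_E[OF a] rp_E[OF a'] i k L False in auto)
      also have "\<dots> = (\<Sum>j\<in>{0..<n}. if j = i then (if i = k then 1 else 0) else 0)"
        by (rule sum.cong[OF refl]) auto
      also have "\<dots> = (if i = k then 1 else 0)" using i by (simp add: sum.delta)
      finally show ?thesis using r rp_E[OF aa' i k L] False by simp
    qed
  qed
qed

lemma ent00: "ent 0 0 = (0::'a pr)"
proof (rule rp_eqI)
  fix L :: "'a set" assume "division_subring L"
  then show "rp (ent 0 0) L = rp (0::'a pr) L" by (simp add: rp_ent center_0[OF ds] rp_zero)
qed

lemma ent11: "ent 1 1 = (1::'a pr)"
proof (rule rp_eqI)
  fix L :: "'a set" assume "division_subring L"
  then show "rp (ent 1 1) L = rp (1::'a pr) L" by (simp add: rp_ent center_1[OF ds] rp_one)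
qed

lemma E_central_idx:
  assumes zK: "z \<in> K" and zc: "\<And>x. z * x = x * z" and i: "i < n" and j: "j < n"
  shows "E z $$ (i,j) = (if i = j then ent z 1 else 0)"
proof -
  have "coord (z * bs ! j) (bs ! i) = (if bs ! i = bs ! j then z else 0)"
    by (rule coord_central[OF zK zc nthB[OF i] nthB[OF j]])
  also have "(bs ! i = bs ! j) = (i = j)" using dist i j by (simp add: nth_eq_iff_index_eq)
  finally show ?thesis using i j by (simp add: E_index ent00)
qed

lemma E_one: "E 1 = 1\<^sub>m n"
proof (rule eq_matI)
  fix i j assume "i < dim_row (1\<^sub>m n :: 'a pr mat)" "j < dim_col (1\<^sub>m n :: 'a pr mat)"
  then have i: "i < n" and j: "j < n" by simp_all
  have "1 \<in> K" using ds unfolding division_subring_def by blast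
  then show "E 1 $$ (i,j) = 1\<^sub>m n $$ (i,j)"
    using E_central_idx[of 1 i j] i j by (simp add: ent11)
qed (simp_all add: E_def)

lemma K_inverse: "x \<in> K \<Longrightarrow> inverse x \<in> K"
  using ds unfolding division_subring_def by (cases "x = 0") auto

lemma det_E_inv: assumes x: "x \<in> K" "x \<noteq> 0" shows "det (E x) * det (E (inverse x)) = 1"
proof -
  have "E x * E (inverse x) = E (x * inverse x)" using E_mult[OF x(1) K_inverse[OF x(1)]] by simp
  also have "\<dots> = 1\<^sub>m n" using x(2) E_one by simp
  finally have "det (E x * E (inverse x)) = 1" by simp
  then show ?thesis using det_mult[OF E_carrier E_carrier] by simp
qed

lemma det_E_comm: assumes "x \<in> K" "y \<in> K" "x \<noteq> 0" "y \<noteq> 0" shows "det (E (comm x y)) = 1"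
proof -
  have ix: "inverse x \<in> K" and iy: "inverse y \<in> K" using K_inverse assms by auto
  have xy: "x * y \<in> K" using K_mult assms by blast
  have xyx: "x * y * inverse x \<in> K" using K_mult[OF xy ix] .
  have "E (comm x y) = E x * E y * E (inverse x) * E (inverse y)"
    unfolding comm_def using E_mult[OF xyx iy] E_mult[OF xy ix] E_mult[OF assms(1,2)] by simp
  then have "det (E (comm x y)) = det (E x) * det (E y) * det (E (inverse x)) * det (E (inverse y))"
    using det_mult E_carrier mult_carrier_mat by metis
  also have "\<dots> = (det (E x) * det (E (inverse x))) * (det (E y) * det (E (inverse y)))"
    by (simp add: ac_simps)
  also have "\<dots> = 1" using det_E_inv assms by simp
  finally show ?thesis .
qed

lemma det_E_cprod: "p \<in> cprod K \<Longrightarrow> det (E p) = 1"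
proof (induction p rule: cprod.induct)
  case one then show ?case using E_one by simp
next
  case (step x y p)
  have c: "comm x y \<in> K" using cprod_sub[OF comm_in[OF step.hyps(1-4)] ds] .
  have p: "p \<in> K" using cprod_sub[OF step.hyps(5) ds] .
  have "det (E (comm x y * p)) = det (E (comm x y)) * det (E p)"
    using E_mult[OF c p] det_mult[OF E_carrier E_carrier] by simp
  then show ?case using det_E_comm[OF step.hyps(1-4)] step.IH by simp
qed

lemma det_E_central:
  assumes zK: "z \<in> K" and zc: "\<And>x. z * x = x * z"
  shows "det (E z) = ent z 1 ^ n"
proof -
  have dr: "dim_row (E z) = n" by (simp add: E_def)
  have ut: "upper_triangular (E z)"
    unfolding upper_triangular_def
  proof (intro allI impI)
    fix i j assume "i < dim_row (E z)" "j < i"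
    then show "E z $$ (i,j) = 0" using E_central_idx[OF zK zc, of i j] dr by simp
  qed
  have "det (E z) = prod_list (diag_mat (E z))" by (rule det_upper_triangular[OF ut E_carrier])
  also have "\<dots> = (\<Prod>i = 0..<n. E z $$ (i,i))" by (simp add: prod_list_diag_prod E_def)
  also have "\<dots> = (\<Prod>i = 0..<n. ent z 1)" by (rule prod.cong[OF refl]) (simp add: E_central_idx[OF zK zc])
  also have "\<dots> = ent z 1 ^ n" by simp
  finally show ?thesis .
qed

lemma n_pos: "n > 0"
proof (rule ccontr)
  assume "\<not> n > 0"
  then have "B = {}" by simp
  moreover have "1 \<in> K" using ds unfolding division_subring_def by blast
  ultimately have "(1::'a) = (\<Sum>b\<in>{}. coord 1 b * b)" using coord[of 1] by simp
  then show False by simp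
qed

lemma torsion:
  assumes zp: "z \<in> cprod K" and zc: "\<And>x. z * x = x * z"
  shows "z ^ n = 1"
proof -
  have zK: "z \<in> K" using cprod_sub[OF zp ds] .
  have zF: "z \<in> F" using zK zc by (intro center_I)
  have "ent z 1 ^ n = 1" using det_E_central[OF zK zc] det_E_cprod[OF zp] by simp
  then have "rp (ent z 1 ^ n) K = rp 1 K" by simp
  moreover have "rp (1::'a pr) K = 1" using ds by (simp add: rp_one)
  moreover have "rp (ent z 1) K = z" using rp_ent[OF zF, of 1 K] by simp
  ultimately show ?thesis using rp_power[OF ds, of "ent z 1" n] by simp
qed

end

theorem lemma6p2:
  assumes "weakly_locally_finite TYPE('a::division_ring)"
  shows "\<forall>z \<in> center_of (derived_subgroup :: 'a set). \<exists>n::nat. n > 0 \<and> z ^ n = 1"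
proof
  fix z :: 'a assume z: "z \<in> center_of (derived_subgroup :: 'a set)"
  have zD: "z \<in> derived_subgroup" using z by (rule center_K)
  have zc: "\<And>x. z * x = x * z" by (rule hua[OF z])
  have "z \<in> cprod UNIV" using derived_sub_cprod zD by blast
  then obtain S where S: "finite S" "z \<in> cprod (gen_division_subring S)"
    using cprod_finite_gen by blast
  define K where "K = gen_division_subring S"
  have ds: "division_subring K" unfolding K_def by (rule gen_ds)
  have fd: "fin_dim_over_center K" using assms S(1) unfolding weakly_locally_finite_def K_def by blast
  obtain B where sp: "spans K B" and ind: "\<forall>c. (\<forall>b\<in>B. c b \<in> center_of K) \<longrightarrow> (\<Sum>b\<in>B. c b * b) = 0 \<longrightarrow> (\<forall>b\<in>B. c b = 0)"
    using exists_basis[OF ds fd] by blast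
  have "finite B" using sp unfolding spans_def by blast
  then obtain bs where bs: "set bs = B" "distinct bs" using finite_distinct_list by blast
  interpret fdb K bs
  proof
    show "division_subring K" by (rule ds)
    show "distinct bs" by (rule bs(2))
    show "spans K (set bs)" using sp bs(1) by simp
    show "\<And>c. \<forall>b\<in>set bs. c b \<in> center_of K \<Longrightarrow> (\<Sum>b\<in>set bs. c b * b) = 0 \<Longrightarrow> \<forall>b\<in>set bs. c b = 0"
      using ind bs(1) by blast
  qed
  have "z ^ length bs = 1" using torsion[of z] S(2) zc unfolding K_def by blast
  then show "\<exists>n::nat. n > 0 \<and> z ^ n = 1" using n_pos by blast
qed

end
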